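(* Let $c>0$ and $m>0$ be constants and let $f:\mathbb{Z}\to\mathbb{Z}$ be a non-decreasing map such that $f(j)-f(i)\le j-i$ for all integers $i<j$, and $f(j)-f(i)\ge c\,(j-i)$ for all integers $i,j$ with $i+m\le j$. Let $B$ be an integer-valued random variable with $0<\mathrm{Var}(B)<\infty$. Then $$\mathrm{Var}(f(B))\ \ge\ c^2\left(1-\frac{2m}{c\sqrt{\mathrm{Var}(B)}}\right)\mathrm{Var}(B).$$ *)

theory Defs
  imports "HOL-Probability.Probability"
begin

end

theory Submission
  imports Defs
begin

lemma key_pw:
  fixes f :: "int \<Rightarrow> int" and c m mu :: real and x :: int
  assumes "c > 0" and "m > 0"
    and "mono f"
    and h: "\<And>i j. real_of_int i + m \<le> real_of_int j \<Longrightarrow> real_of_int (f j - f i) \<ge> c * real_of_int (j - i)"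
  shows "(real_of_int (f x) - (real_of_int (f (floor mu)) + c * (mu - floor mu))) * (x - mu)
         \<ge> c * (x - mu)\<^sup>2 - c * m * \<bar>x - mu\<bar>"
proof -
  define k where "k = floor mu"
  have k1: "real_of_int k \<le> mu" "mu < real_of_int k + 1" unfolding k_def by linarith+
  have up: "real_of_int (f y) - real_of_int (f z) \<ge> c * (y - z) - c * m" if "z \<le> y" for y z :: int
  proof (cases "real_of_int z + m \<le> real_of_int y")
    case True
    have "c * m > 0" using assms by simp
    with h[OF True] show ?thesis by (simp add: algebra_simps)
  next
    case False
    have "f z \<le> f y" using `mono f` that by (simp add: monoD)
    moreover have "c * (y - z) - c * m \<le> 0"
    proof -
      have "c * (real_of_int y - z) \<le> c * m" using False assms by (intro mult_left_mono) auto
      then show ?thesis by simp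
    qed
    ultimately show ?thesis by linarith
  qed
  consider "real_of_int x > mu" | "real_of_int x < mu" | "real_of_int x = mu" by linarith
  then show ?thesis
  proof cases
    case 1
    hence "k \<le> x" using k1 by linarith
    from up[OF this] have "real_of_int (f x) - (real_of_int (f k) + c * (mu - k)) \<ge> c * (x - mu) - c * m"
      by (simp add: algebra_simps)
    hence "(real_of_int (f x) - (real_of_int (f k) + c * (mu - k))) * (x - mu) \<ge> (c * (x - mu) - c * m) * (x - mu)"
      using 1 by (intro mult_right_mono) auto
    then show ?thesis using 1 unfolding k_def by (simp add: power2_eq_square algebra_simps)
  next
    case 2
    hence "x \<le> k" using k1 unfolding k_def by linarith
    from up[OF this] have "real_of_int (f x) - (real_of_int (f k) + c * (mu - k)) \<le> c * (x - mu) + c * m"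
      by (simp add: algebra_simps)
    hence "(real_of_int (f x) - (real_of_int (f k) + c * (mu - k))) * (x - mu) \<ge> (c * (x - mu) + c * m) * (x - mu)"
      using 2 by (intro mult_right_mono_neg) auto
    then show ?thesis using 2 unfolding k_def by (simp add: power2_eq_square algebra_simps)
  next
    case 3 then show ?thesis by simp
  qed
qed

theorem lemma3p2:
  fixes M :: "'a measure" and B :: "'a \<Rightarrow> int" and f :: "int \<Rightarrow> int"
    and c m :: real
  assumes "prob_space M"
    and "c > 0" and "m > 0"
    and "mono f"
    and "\<And>i j. i < j \<Longrightarrow> f j - f i \<le> j - i"
    and "\<And>i j. real_of_int i + m \<le> real_of_int j \<Longrightarrow> real_of_int (f j - f i) \<ge> c * real_of_int (j - i)"
    and "B \<in> measurable M (count_space UNIV)"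
    and "integrable M (\<lambda>x. (real_of_int (B x))\<^sup>2)"
    and "prob_space.variance M (\<lambda>x. real_of_int (B x)) > 0"
  shows "prob_space.variance M (\<lambda>x. real_of_int (f (B x)))
           \<ge> c\<^sup>2 * (1 - 2 * m / (c * sqrt (prob_space.variance M (\<lambda>x. real_of_int (B x)))))
               * prob_space.variance M (\<lambda>x. real_of_int (B x))"
proof -
  interpret prob_space M by fact
  have meas: "(\<lambda>x. g (B x)) \<in> borel_measurable M" for g :: "int \<Rightarrow> real"
    by (rule measurable_compose[OF assms(7)]) simp
  define V where "V = variance (\<lambda>x. real_of_int (B x))"
  define s where "s = sqrt V"
  have V0: "V > 0" using assms(9) V_def by simp
  have s0: "s > 0" and ss: "s * s = V" using V0 unfolding s_def by (auto simp: real_sqrt_mult_self)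
  define mu where "mu = expectation (\<lambda>x. real_of_int (B x))"
  define Y where "Y = (\<lambda>x. real_of_int (f (B x)))"
  define e where "e = expectation Y"
  define a where "a = real_of_int (f (floor mu)) + c * (mu - floor mu)"
  have c1: "c \<le> 1"
  proof -
    define j where "j = ceiling m"
    have j: "real_of_int 0 + m \<le> real_of_int j" "j > 0" using assms(3) unfolding j_def by auto
    have "c * j \<le> real_of_int (f j - f 0)" using assms(6)[OF j(1)] by simp
    also have "\<dots> \<le> j" using assms(5)[OF j(2)] by simp
    finally show ?thesis using j(2) by simp
  qed
  have iB2: "integrable M (\<lambda>x. (real_of_int (B x))\<^sup>2)" by fact
  have iB: "integrable M (\<lambda>x. real_of_int (B x))"
    by (rule square_integrable_imp_integrable[OF meas iB2])
  have iY2: "integrable M (\<lambda>x. (Y x)\<^sup>2)"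
  proof (rule Bochner_Integration.integrable_bound[where f="\<lambda>x. 2 * (real_of_int (f 0))\<^sup>2 + 2 * (real_of_int (B x))\<^sup>2"])
    show "integrable M (\<lambda>x. 2 * (real_of_int (f 0))\<^sup>2 + 2 * (real_of_int (B x))\<^sup>2)"
      using iB2 by simp
    show "(\<lambda>x. (Y x)\<^sup>2) \<in> borel_measurable M" unfolding Y_def using meas by simp
    show "AE x in M. norm ((Y x)\<^sup>2) \<le> norm (2 * (real_of_int (f 0))\<^sup>2 + 2 * (real_of_int (B x))\<^sup>2)"
    proof (rule AE_I2)
      fix x
      have b: "\<bar>real_of_int (f (B x)) - f 0\<bar> \<le> \<bar>real_of_int (B x)\<bar>"
      proof -
        consider "B x > 0" | "B x < 0" | "B x = 0" by linarith
        then show ?thesis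
        proof cases
          case 1
          then show ?thesis using assms(5)[OF 1] monoD[OF assms(4), of 0 "B x"] by simp
        next
          case 2
          then show ?thesis using assms(5)[OF 2] monoD[OF assms(4), of "B x" 0] by simp
        qed simp
      qed
      have "(Y x)\<^sup>2 \<le> 2 * (real_of_int (f 0))\<^sup>2 + 2 * (real_of_int (f (B x)) - f 0)\<^sup>2"
      proof -
        have "0 \<le> (Y x - 2 * real_of_int (f 0))\<^sup>2" by simp
        thus ?thesis unfolding Y_def by (simp add: power2_eq_square algebra_simps)
      qed
      also have "\<dots> \<le> 2 * (real_of_int (f 0))\<^sup>2 + 2 * (real_of_int (B x))\<^sup>2"
        using b by (simp add: abs_le_square_iff)
      finally show "norm ((Y x)\<^sup>2) \<le> norm (2 * (real_of_int (f 0))\<^sup>2 + 2 * (real_of_int (B x))\<^sup>2)"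
        by simp
    qed
  qed
  have iY: "integrable M Y"
    by (rule square_integrable_imp_integrable[OF _ iY2]) (unfold Y_def, rule meas)
  define D where "D = (\<lambda>x. real_of_int (B x) - mu)"
  have iD: "integrable M D" unfolding D_def using iB by simp
  have iD2: "integrable M (\<lambda>x. (D x)\<^sup>2)"
    unfolding D_def power2_diff using iB2 iB by simp
  have ED: "expectation D = 0" unfolding D_def mu_def using iB by (simp add: prob_space)
  have ED2: "expectation (\<lambda>x. (D x)\<^sup>2) = V" unfolding D_def V_def mu_def by simp
  have pw: "(Y x - e)\<^sup>2 \<ge> (c\<^sup>2 - c\<^sup>2 * m / s) * (D x)\<^sup>2 - c\<^sup>2 * m * s + (2 * c * (a - e)) * D x" for x
  proof -
    have k: "(Y x - a) * D x \<ge> c * (D x)\<^sup>2 - c * m * \<bar>D x\<bar>"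
      using key_pw[OF assms(2,3,4,6), where mu=mu and x="B x"] unfolding Y_def D_def a_def by simp
    have am: "\<bar>D x\<bar> \<le> ((D x)\<^sup>2 / s + s) / 2"
    proof -
      have "0 \<le> (\<bar>D x\<bar> - s)\<^sup>2" by simp
      hence "2 * s * \<bar>D x\<bar> \<le> (D x)\<^sup>2 + s * s" by (simp add: power2_eq_square algebra_simps)
      thus ?thesis using s0 by (simp add: field_simps)
    qed
    have sq: "(Y x - e)\<^sup>2 \<ge> 2 * c * ((Y x - e) * D x) - c\<^sup>2 * (D x)\<^sup>2"
    proof -
      have "0 \<le> (Y x - e - c * D x)\<^sup>2" by simp
      thus ?thesis by (simp add: power2_eq_square algebra_simps)
    qed
    have "2 * c * ((Y x - e) * D x) = 2 * c * ((Y x - a) * D x) + 2 * c * (a - e) * D x"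
      by (simp add: algebra_simps)
    also have "\<dots> \<ge> 2 * c * (c * (D x)\<^sup>2 - c * m * \<bar>D x\<bar>) + 2 * c * (a - e) * D x"
      using k assms(2) by simp
    finally have 1: "2 * c * ((Y x - e) * D x) \<ge> 2 * c\<^sup>2 * (D x)\<^sup>2 - 2 * c\<^sup>2 * m * \<bar>D x\<bar> + 2 * c * (a - e) * D x"
      by (simp add: power2_eq_square algebra_simps)
    have "2 * c\<^sup>2 * m * \<bar>D x\<bar> \<le> 2 * c\<^sup>2 * m * (((D x)\<^sup>2 / s + s) / 2)"
      using am assms(2,3) by (intro mult_left_mono) auto
    also have "\<dots> = c\<^sup>2 * m / s * (D x)\<^sup>2 + c\<^sup>2 * m * s" using s0 by (simp add: field_simps)
    finally have 2: "2 * c\<^sup>2 * m * \<bar>D x\<bar> \<le> c\<^sup>2 * m / s * (D x)\<^sup>2 + c\<^sup>2 * m * s" .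
    show ?thesis using sq 1 2 by (simp add: algebra_simps)
  qed
  have iL: "integrable M (\<lambda>x. (Y x - e)\<^sup>2)"
    unfolding power2_diff using iY2 iY by simp
  have iR: "integrable M (\<lambda>x. (c\<^sup>2 - c\<^sup>2 * m / s) * (D x)\<^sup>2 - c\<^sup>2 * m * s + (2 * c * (a - e)) * D x)"
    using iD2 iD by simp
  have "expectation (\<lambda>x. (c\<^sup>2 - c\<^sup>2 * m / s) * (D x)\<^sup>2 - c\<^sup>2 * m * s + (2 * c * (a - e)) * D x)
        \<le> expectation (\<lambda>x. (Y x - e)\<^sup>2)"
    by (rule integral_mono[OF iR iL pw])
  moreover have "expectation (\<lambda>x. (c\<^sup>2 - c\<^sup>2 * m / s) * (D x)\<^sup>2 - c\<^sup>2 * m * s + (2 * c * (a - e)) * D x)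
      = (c\<^sup>2 - c\<^sup>2 * m / s) * V - c\<^sup>2 * m * s"
    using iD2 iD ED ED2 by (simp add: prob_space)
  ultimately have main: "variance Y \<ge> (c\<^sup>2 - c\<^sup>2 * m / s) * V - c\<^sup>2 * m * s"
    unfolding e_def by simp
  have "c\<^sup>2 * (1 - 2 * m / (c * s)) * V = c\<^sup>2 * V - 2 * c * m * s"
    using s0 assms(2) ss by (simp add: field_simps power2_eq_square)
  also have "\<dots> \<le> c\<^sup>2 * V - 2 * c\<^sup>2 * m * s"
  proof -
    have "c\<^sup>2 * m * s \<le> c * m * s" using c1 assms(2,3) s0 by (simp add: power2_eq_square)
    thus ?thesis by simp
  qed
  also have "\<dots> = (c\<^sup>2 - c\<^sup>2 * m / s) * V - c\<^sup>2 * m * s"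
    using s0 ss by (simp add: field_simps)
  also have "\<dots> \<le> variance Y" by (rule main)
  finally show ?thesis unfolding Y_def s_def V_def .
qed

end
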